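(* Let $a>1$ and $b>1$ be integers, let $n=a+b-1$, and consider the 1-connected $(a,b)$-puzzle on $V=\{1,2,\dots,n\}$, i.e. the cycle set consisting of the two cycles $\alpha=(1\ 2\ \dots\ a)$ and $\beta=(a\ a+1\ \dots\ n)$. Its configuration group $H=\langle \alpha,\beta\rangle\le S_n$ is the alternating group $A_n$ if both $a$ and $b$ are odd, and it is the symmetric group $S_n$ otherwise. Moreover, any permutation in $H$ can be generated in $O(n^2)$ shifts; that is, there is an absolute constant $K$ (independent of $a,b$) such that every element of $H$ is a product of at most $Kn^2$ factors, each of which is one of $\alpha,\alpha^{-1},\beta,\beta^{-1}$.
   Context: Permutations are written in cycle notation. Shifting the tokens (one on each vertex of $V$) along a cycle $(v_1\ v_2\ \dots\ v_j)$ in either direction corresponds to applying the permutation $(v_1\ v_2\ \dots\ v_j)$ or its inverse; a "shift" is one such application. The configuration group of a cycle set is the subgroup of $S_n$ generated by the permutations corresponding to its cycles. $A_n$ denotes the group of even permutations and $S_n$ the group of all permutations of $\{1,\dots,n\}$. *)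

theory Defs
  imports "HOL-Algebra.Sym_Groups"
begin

definition puzzle_alpha :: "nat \<Rightarrow> nat \<Rightarrow> nat \<Rightarrow> nat" where
  "puzzle_alpha a b = cycle_of_list [1..<a+1]"

definition puzzle_beta :: "nat \<Rightarrow> nat \<Rightarrow> nat \<Rightarrow> nat" where
  "puzzle_beta a b = cycle_of_list [a..<a+b]"

definition config_group :: "nat \<Rightarrow> nat \<Rightarrow> (nat \<Rightarrow> nat) set" where
  "config_group a b = generate (sym_group (a+b-1)) {puzzle_alpha a b, puzzle_beta a b}"

definition puzzle_shifts :: "nat \<Rightarrow> nat \<Rightarrow> (nat \<Rightarrow> nat) set" where
  "puzzle_shifts a b = {puzzle_alpha a b, inv' (puzzle_alpha a b), puzzle_beta a b, inv' (puzzle_beta a b)}"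

end

theory Submission imports Defs begin

definition icf :: "nat \<Rightarrow> nat \<Rightarrow> nat \<Rightarrow> nat" where
  "icf lo hi u = (if lo \<le> u \<and> u < hi then (if Suc u < hi then Suc u else lo) else u)"

lemma cycle_upt: "cycle_of_list [lo..<hi] = icf lo hi"
proof (induction "hi - lo" arbitrary: lo)
  case 0
  then show ?case by (auto simp: icf_def fun_eq_iff)
next
  case (Suc d)
  show ?case
  proof (cases "hi = Suc lo")
    case True
    then show ?thesis by (auto simp: icf_def fun_eq_iff)
  next
    case False
    with Suc have h: "Suc lo < hi" by auto
    have "[lo..<hi] = lo # Suc lo # [Suc (Suc lo)..<hi]" using h by (simp add: upt_conv_Cons)
    moreover have "[Suc lo..<hi] = Suc lo # [Suc (Suc lo)..<hi]" using h by (simp add: upt_conv_Cons)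
    ultimately have e: "cycle_of_list [lo..<hi] = transpose lo (Suc lo) \<circ> cycle_of_list [Suc lo..<hi]"
      by simp
    have IH: "cycle_of_list [Suc lo..<hi] = icf (Suc lo) hi" using Suc by auto
    show ?thesis unfolding e IH using h by (auto simp: icf_def fun_eq_iff transpose_def)
  qed
qed

lemma icf_pow_in:
  assumes "lo \<le> u" "u < hi" "k \<le> hi - lo"
  shows "(icf lo hi ^^ k) u = (if u + k < hi then u + k else u + k - (hi - lo))"
  using assms
proof (induction k)
  case 0 then show ?case by simp
next
  case (Suc k)
  then show ?case by (auto simp: icf_def)
qed

lemma icf_pow_out:
  assumes "\<not> (lo \<le> u \<and> u < hi)"
  shows "(icf lo hi ^^ k) u = u"
  using assms by (induction k) (auto simp: icf_def)


definition wl :: "nat \<Rightarrow> nat \<Rightarrow> (nat \<Rightarrow> nat) \<Rightarrow> nat \<Rightarrow> bool" where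
  "wl a b p k = (\<exists>ws. set ws \<subseteq> puzzle_shifts a b \<and> length ws \<le> k \<and> p = foldr (\<circ>) ws id)"

lemma wl_id: "wl a b id k"
  unfolding wl_def by (rule exI[of _ "[]"]) auto

lemma wl_id'[simp]: "wl a b (\<lambda>x. x) k"
  using wl_id by (simp add: id_def)

lemma wl_mono: "wl a b p k \<Longrightarrow> k \<le> m \<Longrightarrow> wl a b p m"
  unfolding wl_def by fastforce

lemma foldr_comp_gen: "foldr (\<circ>) xs f = foldr (\<circ>) xs id \<circ> f"
  by (induction xs) (auto simp: fun_eq_iff)

lemma foldr_comp_append: "foldr (\<circ>) (xs @ ys) id = foldr (\<circ>) xs id \<circ> foldr (\<circ>) ys id"
  using foldr_comp_gen by (simp)

lemma wl_comp: "wl a b p k \<Longrightarrow> wl a b q m \<Longrightarrow> wl a b (p \<circ> q) (k + m)"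
  unfolding wl_def
proof (elim exE conjE)
  fix ws vs assume "set ws \<subseteq> puzzle_shifts a b" "length ws \<le> k" "p = foldr (\<circ>) ws id"
    "set vs \<subseteq> puzzle_shifts a b" "length vs \<le> m" "q = foldr (\<circ>) vs id"
  then show "\<exists>ws. set ws \<subseteq> puzzle_shifts a b \<and> length ws \<le> k + m \<and> p \<circ> q = foldr (\<circ>) ws id"
    by (intro exI[of _ "ws @ vs"]) (simp add: foldr_comp_append del: foldr_append)
qed

lemma wl_shift: "s \<in> puzzle_shifts a b \<Longrightarrow> wl a b s 1"
  unfolding wl_def by (rule exI[of _ "[s]"]) auto

lemma wl_pow: "wl a b p k \<Longrightarrow> wl a b (p ^^ m) (m * k)"
proof (induction m)
  case 0 then show ?case by (simp add: wl_id)
next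
  case (Suc m)
  then have "wl a b (p \<circ> p ^^ m) (k + m * k)" using wl_comp by blast
  moreover have "p ^^ Suc m = p \<circ> p ^^ m" by (rule funpow.simps(2))
  ultimately show ?case by (simp only: mult_Suc)
qed

lemma shift_bij: "s \<in> puzzle_shifts a b \<Longrightarrow> bij s \<and> inv' s \<in> puzzle_shifts a b"
proof -
  have ba: "bij (puzzle_alpha a b)" "bij (puzzle_beta a b)"
    unfolding puzzle_alpha_def puzzle_beta_def
    using permutation_bijective permutation_of_cycle by blast+
  assume "s \<in> puzzle_shifts a b"
  then show ?thesis using ba unfolding puzzle_shifts_def
    by (auto simp: bij_imp_bij_inv inv_inv_eq)
qed

lemma wl_inv: "wl a b p k \<Longrightarrow> bij p \<and> wl a b (inv' p) k"
proof -
  have H: "set ws \<subseteq> puzzle_shifts a b \<Longrightarrow> bij (foldr (\<circ>) ws id) \<and> wl a b (inv' (foldr (\<circ>) ws id)) (length ws)" for ws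
  proof (induction ws)
    case Nil then show ?case by (simp add: wl_id bij_id[unfolded id_def])
  next
    case (Cons s ws)
    then have s: "bij s" "inv' s \<in> puzzle_shifts a b" using shift_bij by auto
    from Cons.prems have "set ws \<subseteq> puzzle_shifts a b" by (simp only: set_simps insert_subset)
    note ih0 = Cons.IH[OF this]
    have ih: "bij (foldr (\<circ>) ws id)" "wl a b (inv' (foldr (\<circ>) ws id)) (length ws)"
      using ih0 by (rule conjunct1, rule conjunct2)
    have w1: "wl a b (inv' (foldr (\<circ>) ws id) \<circ> inv' s) (length ws + 1)"
      using wl_comp[OF ih(2) wl_shift[OF s(2)]] .
    have e3: "inv' (s \<circ> foldr (\<circ>) ws id) = inv' (foldr (\<circ>) ws id) \<circ> inv' s"
      using o_inv_distrib s(1) ih(1) by blast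
    have b1: "bij (s \<circ> foldr (\<circ>) ws id)" using s(1) ih(1) bij_comp by blast
    have e1: "foldr (\<circ>) (s#ws) id = s \<circ> foldr (\<circ>) ws id" by (simp only: foldr.simps comp_apply)
    have e2: "length (s#ws) = length ws + 1" by simp
    show ?case unfolding e1 e2 e3 using b1 w1 by (rule conjI)
  qed
  assume "wl a b p k"
  then obtain ws where ws: "set ws \<subseteq> puzzle_shifts a b" "length ws \<le> k" "p = foldr (\<circ>) ws id"
    unfolding wl_def by blast
  have "bij p \<and> wl a b (inv' p) (length ws)" using H[OF ws(1)] unfolding ws(3)[symmetric] .
  then show ?thesis using wl_mono ws(2) by blast
qed

definition tc :: "nat \<Rightarrow> nat \<Rightarrow> nat \<Rightarrow> nat \<Rightarrow> nat" where
  "tc x y z = (\<lambda>u. if u = x then y else if u = y then z else if u = z then x else u)"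

lemma tc_rot: "distinct [x,y,z] \<Longrightarrow> tc x y z = tc y z x"
  by (auto simp: tc_def fun_eq_iff)

lemma tc_conj: assumes "bij g" "distinct [x,y,z]"
  shows "g \<circ> tc x y z \<circ> inv' g = tc (g x) (g y) (g z)"
proof
  fix u
  obtain w where w: "u = g w" using assms(1) by (metis bij_def surj_def)
  have i: "inv' g (g w) = w" using assms(1) by (simp add: bij_def)
  have inj: "g p = g q \<longleftrightarrow> p = q" for p q using assms(1) by (auto simp: bij_def inj_eq)
  show "(g \<circ> tc x y z \<circ> inv' g) u = tc (g x) (g y) (g z) u"
    unfolding w using assms(2) by (auto simp: tc_def i inj)
qed

lemma tc_inv: assumes "distinct [x,y,z]" shows "inv' (tc x y z) = tc x z y"
  using assms by (intro inv_unique_comp) (auto simp: tc_def fun_eq_iff)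

lemma wl_conj: "wl a b g k \<Longrightarrow> wl a b c m \<Longrightarrow> wl a b (g \<circ> c \<circ> inv' g) (2*k + m)"
proof -
  assume g: "wl a b g k" and c: "wl a b c m"
  have "wl a b (inv' g) k" using wl_inv[OF g] by auto
  then have "wl a b (g \<circ> c \<circ> inv' g) (k + m + k)" using wl_comp[OF wl_comp[OF g c]] by blast
  then show ?thesis by (rule wl_mono) auto
qed

lemma wl_conj_tc: "wl a b g k \<Longrightarrow> wl a b (tc x y z) m \<Longrightarrow> distinct [x,y,z]
   \<Longrightarrow> wl a b (tc (g x) (g y) (g z)) (2*k + m)"
proof -
  assume g: "wl a b g k" and c: "wl a b (tc x y z) m" and d: "distinct [x,y,z]"
  have bg: "bij g" using wl_inv[OF g] by blast
  from wl_conj[OF g c] show ?thesis unfolding tc_conj[OF bg d] .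
qed


context fixes a b :: nat assumes a1: "1 < a" and b1: "1 < b"
begin

lemma alpha_eq: "puzzle_alpha a b = icf 1 (a+1)"
  unfolding puzzle_alpha_def cycle_upt ..

lemma beta_eq: "puzzle_beta a b = icf a (a+b)"
  unfolding puzzle_beta_def cycle_upt ..

lemma sigma_eq: "puzzle_alpha a b \<circ> puzzle_beta a b = icf 1 (a+b)"
  unfolding alpha_eq beta_eq using a1 b1 by (auto simp: icf_def fun_eq_iff)

lemma tau_eq: "puzzle_alpha a b \<circ> puzzle_beta a b \<circ> inv' (puzzle_alpha a b) \<circ> inv' (puzzle_beta a b)
   = tc 1 (a+1) a"
proof -
  let ?A = "puzzle_alpha a b" and ?B = "puzzle_beta a b"
  have bA: "bij ?A" and bB: "bij ?B" using shift_bij[of _ a b] unfolding puzzle_shifts_def by auto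
  have key: "tc 1 (a+1) a \<circ> ?B \<circ> ?A = ?A \<circ> ?B"
    unfolding alpha_eq beta_eq using a1 b1 by (auto simp: icf_def fun_eq_iff tc_def)
  have "?A \<circ> ?B \<circ> inv' ?A \<circ> inv' ?B = tc 1 (a+1) a \<circ> ?B \<circ> (?A \<circ> inv' ?A) \<circ> inv' ?B"
    unfolding key[symmetric] by (simp add: comp_assoc)
  also have "\<dots> = tc 1 (a+1) a"
  proof -
    have h0: "?A \<circ> inv' ?A = id" using surj_iff bij_is_surj[OF bA] by blast
    have h1: "?A \<circ> (inv' ?A \<circ> f) = f" for f
      by (simp only: comp_assoc[symmetric] h0 id_comp)
    have h2: "?B \<circ> inv' ?B = id" using surj_iff bij_is_surj[OF bB] by blast
    show ?thesis by (simp add: comp_assoc h1 h2)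
  qed
  finally show ?thesis .
qed

lemma wl_alpha: "wl a b (puzzle_alpha a b) 1" and wl_beta: "wl a b (puzzle_beta a b) 1"
  by (rule wl_shift, simp add: puzzle_shifts_def)+

lemma wl_tau: "wl a b (tc 1 (a+1) a) 4"
proof -
  have s: "wl a b (inv' (puzzle_alpha a b)) 1" "wl a b (inv' (puzzle_beta a b)) 1"
    by (rule wl_shift, simp add: puzzle_shifts_def)+
  have "wl a b (puzzle_alpha a b \<circ> puzzle_beta a b \<circ> inv' (puzzle_alpha a b) \<circ> inv' (puzzle_beta a b)) (1+1+1+1)"
    by (intro wl_comp wl_alpha wl_beta s)
  then show ?thesis unfolding tau_eq by (rule wl_mono) simp
qed

lemma wl_sigma_pow: "wl a b (icf 1 (a+b) ^^ k) (k*2)"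
  unfolding sigma_eq[symmetric] using wl_pow[OF wl_comp[OF wl_alpha wl_beta], of k] by (rule wl_mono) simp

lemma wl_alpha_pow: "wl a b (icf 1 (a+1) ^^ k) (k*1)"
  unfolding alpha_eq[symmetric] using wl_pow wl_alpha by blast

lemma wl_beta_pow: "wl a b (icf a (a+b) ^^ k) (k*1)"
  unfolding beta_eq[symmetric] using wl_pow wl_beta by blast

lemma pair_caseA:
  assumes v: "1 \<le> v" "v < s" "s < a+b-1" and c: "b - 1 \<le> s - v"
  shows "wl a b (tc s (s+1) v) (8*(a+b))"
proof -
  define i where "i = s - v + 2 - b"
  define k where "k = v + b - 2"
  let ?g = "icf 1 (a+1) ^^ i"
  let ?h = "icf 1 (a+b) ^^ k"
  have i: "1 \<le> i" "i \<le> a - 1" using v c a1 b1 unfolding i_def by auto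
  have g: "?g 1 = 1 + i" "?g (a+1) = a+1" "?g a = i"
    using i a1 by (auto simp: icf_pow_in icf_pow_out)
  have w1: "wl a b (tc (1+i) (a+1) i) (2*(i*1) + 4)"
    using wl_conj_tc[OF wl_alpha_pow wl_tau, of i] a1 unfolding g by auto
  have r1: "k + i = s" using i a1 b1 v c unfolding k_def i_def by arith
  have r2: "a+1+k = (a+b-1) + v" using i a1 b1 v c unfolding k_def i_def by arith
  have r3: "k < a+b-1" using i a1 b1 v c unfolding k_def i_def by arith
  have r4: "k + 1 < a+b" using r3 by arith
  note r = r1 r2 r3
  have h1: "?h (1+i) = s+1" using icf_pow_in[of 1 "1+i" "a+b" k] i r v by simp
  have h2: "?h (a+1) = v" using icf_pow_in[of 1 "a+1" "a+b" k] i r v b1 by simp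
  have h3: "?h i = s" using icf_pow_in[of 1 "i" "a+b" k] i r v by simp
  note h = h1 h2 h3
  have w2: "wl a b (tc (s+1) v s) (2*(k*2) + (2*(i*1) + 4))"
  proof -
    have "i < a" using i a1 by linarith
    then have d: "distinct [1+i, a+1, i]" by simp
    show ?thesis using wl_conj_tc[OF wl_sigma_pow w1 d, of k] unfolding h .
  qed
  have e: "tc s (s+1) v = tc (s+1) v s" using v by (intro tc_rot) auto
  have "2*(k*2) + (2*(i*1) + 4) \<le> 8*(a+b)" using r4 i by arith
  then show ?thesis unfolding e by (rule wl_mono[OF w2])
qed

lemma pair_caseB:
  assumes v: "1 \<le> v" "v < s" "s < a+b-1" and c: "s - v \<le> b - 2"
  shows "wl a b (tc s (s+1) v) (8*(a+b))"
proof -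
  define j where "j = s - v"
  define k where "k = (if a \<le> v then v - a else v + b - 1)"
  let ?g1 = "icf a (a+b) ^^ j"
  let ?g2 = "icf 1 (a+1) ^^ (a-1)"
  let ?h = "icf 1 (a+b) ^^ k"
  have j: "1 \<le> j" "j \<le> b - 2" using v c unfolding j_def by auto
  have g1: "?g1 1 = 1" "?g1 (a+1) = a+1+j" "?g1 a = a+j"
    using j a1 b1 by (auto simp: icf_pow_in icf_pow_out)
  have w1: "wl a b (tc 1 (a+1+j) (a+j)) (2*(j*1) + 4)"
    using wl_conj_tc[OF wl_beta_pow wl_tau, of j] a1 unfolding g1 by auto
  have g2: "?g2 1 = a" "?g2 (a+1+j) = a+1+j" "?g2 (a+j) = a+j"
    using j a1 b1 by (auto simp: icf_pow_in icf_pow_out)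
  have w2: "wl a b (tc a (a+1+j) (a+j)) (2*((a-1)*1) + (2*(j*1) + 4))"
    using wl_conj_tc[OF wl_alpha_pow w1, of "a-1"] a1 j unfolding g2 by auto
  have h: "?h a = v" "?h (a+1+j) = s+1" "?h (a+j) = s"
    using j a1 b1 v c unfolding k_def j_def by (auto simp: icf_pow_in)
  have w3: "wl a b (tc v (s+1) s) (2*(k*2) + (2*((a-1)*1) + (2*(j*1) + 4)))"
    using wl_conj_tc[OF wl_sigma_pow w2, of k] a1 j unfolding h by auto
  have e: "tc v (s+1) s = tc s v (s+1)" using tc_rot[of v "s+1" s] tc_rot[of "s+1" s v] v by auto
  have w4: "wl a b (inv' (tc s v (s+1))) (2*(k*2) + (2*((a-1)*1) + (2*(j*1) + 4)))"
    using conjunct2[OF wl_inv[OF w3]] unfolding e .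
  have e2: "inv' (tc s v (s+1)) = tc s (s+1) v" using v by (intro tc_inv) auto
  have "2*(k*2) + (2*((a-1)*1) + (2*(j*1) + 4)) \<le> 8*(a+b)"
    unfolding k_def j_def using v c a1 b1 by auto
  then show ?thesis using w4 unfolding e2 by (intro wl_mono[OF w4[unfolded e2]])
qed

lemma pair3:
  assumes v: "1 \<le> v" "v < s" "s < a+b-1"
  shows "wl a b (tc s (s+1) v) (8*(a+b)) \<and> wl a b (tc s v (s+1)) (8*(a+b))"
proof -
  have w: "wl a b (tc s (s+1) v) (8*(a+b))"
    using pair_caseA[OF v] pair_caseB[OF v] by linarith
  moreover have e: "inv' (tc s (s+1) v) = tc s v (s+1)" using v by (intro tc_inv) auto
  ultimately show ?thesis using conjunct2[OF wl_inv[OF w]] unfolding e by blast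
qed


lemma tc_swaps: "distinct [x,y,z] \<Longrightarrow> tc x y z = transpose x y \<circ> transpose y z"
  by (auto simp: tc_def fun_eq_iff transpose_def)

lemma tc_props: assumes "distinct [x,y,z]" "x \<in> S" "y \<in> S" "z \<in> S"
  shows "tc x y z permutes S" "evenperm (tc x y z)" "permutation (tc x y z)"
proof -
  have e: "tc x y z = transpose x y \<circ> transpose y z" using tc_swaps[OF assms(1)] .
  show "tc x y z permutes S" unfolding e using assms by (intro permutes_compose permutes_swap_id) auto
  show "permutation (tc x y z)" unfolding e by (intro permutation_compose permutation_swap_id)
  show "evenperm (tc x y z)" unfolding e using assms(1)
    by (simp add: evenperm_comp permutation_swap_id evenperm_swap)
qed

lemma reduce:
  "m \<le> a+b-1 \<Longrightarrow> p permutes {1..m} \<Longrightarrow> evenperm p \<Longrightarrow> wl a b p (8*(a+b)*m)"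
proof (induction m arbitrary: p)
  case 0
  then show ?case by (simp add: wl_id)
next
  case (Suc m)
  note p = Suc.prems(2)
  have pp: "permutation p" using p permutes_imp_permutation by blast
  show ?case
  proof (cases "p (Suc m) = Suc m")
    case True
    have "p permutes {1..m}" by (rule permutes_superset[OF p]) (use True in \<open>auto simp: le_Suc_eq\<close>)
    with Suc have "wl a b p (8*(a+b)*m)" by auto
    then show ?thesis by (rule wl_mono) auto
  next
    case False
    define w where "w = p (Suc m)"
    have w: "1 \<le> w" "w \<le> Suc m" "w \<noteq> Suc m"
      using permutes_in_image[OF p, of "Suc m"] False unfolding w_def by auto
    show ?thesis
    proof (cases "m < 2")
      case True
      then have m1: "m = 1" using w by auto
      have "p = transpose 1 2"
      proof
        fix u
        show "p u = transpose 1 2 u"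
        proof (cases "u \<in> {1..2}")
          case False
          then show ?thesis using permutes_not_in[OF p] m1 by (auto simp: transpose_def)
        next
          case True
          have p2: "p 2 = 1" using w m1 unfolding w_def numeral_2_eq_2 by auto
          have "p 1 \<in> {1..2}" using permutes_in_image[OF p, of 1] m1 by auto
          moreover have "p 1 \<noteq> 1"
          proof
            assume "p 1 = 1"
            then have "p 1 = p 2" using p2 by simp
            then have "(1::nat) = 2" using permutes_inj[OF p] by (simp only: inj_eq)
            then show False by simp
          qed
          ultimately have "p 1 = 2" by auto
          moreover have u12: "u = 1 \<or> u = 2" using True by auto
          ultimately show ?thesis using p2 by (auto simp: transpose_def)
        qed
      qed
      then have "\<not> evenperm p" by (simp add: evenperm_swap)
      then show ?thesis using Suc.prems(3) by blast
    next
      case False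
      then have m2: "2 \<le> m" by auto
      have sm: "m < a+b-1" using Suc.prems(1) by auto
      obtain v where v: "1 \<le> v" "v < m" "tc (if w = m then m else w) (Suc m) (if w = m then 1 else m) = tc m (m+1) v \<or>
          tc (if w = m then m else w) (Suc m) (if w = m then 1 else m) = tc m v (m+1)"
      proof (cases "w = m")
        case True
        then show ?thesis using that[of 1] m2 by auto
      next
        case False
        have "tc w (Suc m) m = tc m w (m+1)" using tc_rot[of w "Suc m" m] tc_rot[of "Suc m" m w] False w
          by auto
        then show ?thesis using that[of w] False w by auto
      qed
      define c where "c = tc (if w = m then m else w) (Suc m) (if w = m then 1 else m)"
      have wc: "wl a b c (8*(a+b))" using pair3[OF v(1,2) sm] v(3) unfolding c_def by auto
      have dc: "distinct [if w = m then m else w, Suc m, if w = m then 1 else m]" using w m2 by auto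
      have cp: "c permutes {1..Suc m}" "evenperm c" "permutation c"
        using tc_props[OF dc, of "{1..Suc m}"] w m2 unfolding c_def by auto
      define q where "q = c \<circ> p"
      have q1: "q permutes {1..Suc m}" unfolding q_def using p cp(1) by (rule permutes_compose)
      have "c w = Suc m" unfolding c_def using w m2 by (auto simp: tc_def)
      then have q2: "q (Suc m) = Suc m" unfolding q_def w_def by simp
      have qp: "q permutes {1..m}" by (rule permutes_superset[OF q1]) (use q2 in \<open>auto simp: le_Suc_eq\<close>)
      have qe: "evenperm q" unfolding q_def using cp pp Suc.prems(3) by (simp add: evenperm_comp)
      have wq: "wl a b q (8*(a+b)*m)" using Suc.IH[OF _ qp qe] Suc.prems(1) by auto
      have bc: "bij c" using cp(1) permutes_bij by blast
      have pq: "p = inv' c \<circ> q" unfolding q_def using bc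
        by (simp add: comp_assoc[symmetric] bij_is_inj)
      have "wl a b (inv' c \<circ> q) (8*(a+b) + 8*(a+b)*m)" using wl_comp[OF conjunct2[OF wl_inv[OF wc]] wq] .
      then show ?thesis unfolding pq[symmetric] by (rule wl_mono) simp
    qed
  qed
qed


lemma wl_bound: "p permutes {1..a+b-1} \<Longrightarrow> evenperm p \<or> \<not> (odd a \<and> odd b)
   \<Longrightarrow> wl a b p (17 * (a+b-1)^2)"
proof -
  assume p: "p permutes {1..a+b-1}" and par: "evenperm p \<or> \<not> (odd a \<and> odd b)"
  let ?n = "a+b-1"
  have bnd: "8*(a+b)*?n \<le> 16 * ?n^2" using a1 b1 by (simp add: power2_eq_square)
  have even_case: "wl a b q (16 * ?n^2)" if "q permutes {1..?n}" "evenperm q" for q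
    using reduce[OF _ that] bnd wl_mono by blast
  show ?thesis
  proof (cases "evenperm p")
    case True
    then show ?thesis using even_case[OF p] wl_mono by fastforce
  next
    case False
    then have ab: "even a \<or> even b" using par by auto
    define g where "g = (if even a then puzzle_alpha a b else puzzle_beta a b)"
    have ev_cyc: "distinct xs \<Longrightarrow> evenperm (cycle_of_list xs) = even (length xs - 1)" for xs :: "nat list"
    proof (induction xs rule: cycle_of_list.induct)
      case (1 i j cs)
      have e: "cycle_of_list (i # j # cs) = transpose i j \<circ> cycle_of_list (j # cs)"
        by (simp only: cycle_of_list.simps)
      have "evenperm (cycle_of_list (i # j # cs)) = (evenperm (transpose i j) = evenperm (cycle_of_list (j # cs)))"
        unfolding e by (rule evenperm_comp[OF permutation_swap_id permutation_of_cycle])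
      then have X: "evenperm (cycle_of_list (i # j # cs)) = (False = evenperm (cycle_of_list (j # cs)))"
        using 1 by (simp only: evenperm_swap distinct.simps set_simps) simp
      have IH: "evenperm (cycle_of_list (j # cs)) = even (length (j#cs) - 1)" using 1 by simp
      have l: "even (length (i#j#cs) - 1) = odd (length (j#cs) - 1)" by simp
      show ?case unfolding X l IH by simp
    qed auto
    have gw: "wl a b g 1" unfolding g_def using wl_alpha wl_beta by auto
    have gp: "g permutes {1..?n}"
    proof -
      have "puzzle_alpha a b permutes {1..?n}"
        unfolding puzzle_alpha_def
        by (rule permutes_subset[OF cycle_permutes]) (use b1 in auto)
      moreover have "puzzle_beta a b permutes {1..?n}"
        unfolding puzzle_beta_def
        by (rule permutes_subset[OF cycle_permutes]) (use a1 in auto)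
      ultimately show ?thesis unfolding g_def by auto
    qed
    have ge: "\<not> evenperm g"
      unfolding g_def puzzle_alpha_def puzzle_beta_def using ab a1 b1 ev_cyc[of "[1..<a+1]"] ev_cyc[of "[a..<a+b]"]
      by auto
    define q where "q = inv' g \<circ> p"
    have qp: "q permutes {1..?n}" unfolding q_def using p permutes_inv[OF gp] by (rule permutes_compose)
    have gperm: "permutation g" using gp permutes_imp_permutation by blast
    have pperm: "permutation p" using p permutes_imp_permutation by blast
    have qe: "evenperm q" unfolding q_def using ge False gperm pperm
      by (simp add: evenperm_comp permutation_inverse evenperm_inv)
    have bg: "bij g" using permutes_bij[OF gp] .
    have h0: "g \<circ> inv' g = id" using surj_iff bij_is_surj[OF bg] by blast
    have pq: "p = g \<circ> q" unfolding q_def by (simp only: comp_assoc[symmetric] h0 id_comp)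
    have "wl a b (g \<circ> q) (1 + 16 * ?n^2)" using wl_comp[OF gw even_case[OF qp qe]] .
    then show ?thesis unfolding pq[symmetric] by (rule wl_mono) (use a1 b1 in simp)
  qed
qed

lemma wl_in_gen: "wl a b p k \<Longrightarrow> p \<in> config_group a b"
proof -
  let ?G = "sym_group (a+b-1)"
  let ?A = "puzzle_alpha a b" and ?B = "puzzle_beta a b"
  have inA: "?A \<in> carrier ?G" unfolding sym_group_carrier puzzle_alpha_def
    by (rule permutes_subset[OF cycle_permutes]) (use b1 in auto)
  have inB: "?B \<in> carrier ?G" unfolding sym_group_carrier puzzle_beta_def
    by (rule permutes_subset[OF cycle_permutes]) (use a1 in auto)
  have sh: "s \<in> generate ?G {?A, ?B}" if "s \<in> puzzle_shifts a b" for s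
  proof -
    have "inv\<^bsub>?G\<^esub> ?A \<in> generate ?G {?A, ?B}" "inv\<^bsub>?G\<^esub> ?B \<in> generate ?G {?A, ?B}"
      by (auto intro: generate.inv)
    then have "inv' ?A \<in> generate ?G {?A, ?B}" "inv' ?B \<in> generate ?G {?A, ?B}"
      using sym_group_inv_equality[OF inA] sym_group_inv_equality[OF inB] by auto
    then show ?thesis using that unfolding puzzle_shifts_def by (auto intro: generate.incl)
  qed
  have "set ws \<subseteq> puzzle_shifts a b \<Longrightarrow> foldr (\<circ>) ws id \<in> generate ?G {?A, ?B}" for ws
  proof (induction ws)
    case Nil
    show ?case using generate.one[of ?G "{?A, ?B}"] by (simp add: sym_group_one id_def)
  next
    case (Cons s ws)
    from Cons.prems have hs: "s \<in> puzzle_shifts a b" and hws: "set ws \<subseteq> puzzle_shifts a b"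
      by (simp_all only: set_simps insert_subset)
    have "s \<otimes>\<^bsub>?G\<^esub> foldr (\<circ>) ws id \<in> generate ?G {?A, ?B}"
      by (rule generate.eng[OF sh[OF hs] Cons.IH[OF hws]])
    moreover have "foldr (\<circ>) (s#ws) id = s \<otimes>\<^bsub>?G\<^esub> foldr (\<circ>) ws id"
      by (simp only: foldr.simps comp_apply sym_group_mult)
    ultimately show ?case by (simp only:)
  qed
  moreover assume "wl a b p k"
  ultimately show ?thesis unfolding wl_def config_group_def by blast
qed

lemma group_eq: "config_group a b =
   (if odd a \<and> odd b then carrier (alt_group (a+b-1)) else carrier (sym_group (a+b-1)))"
proof
  let ?G = "sym_group (a+b-1)"
  let ?A = "puzzle_alpha a b" and ?B = "puzzle_beta a b"
  have inA: "?A permutes {1..a+b-1}" unfolding puzzle_alpha_def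
    by (rule permutes_subset[OF cycle_permutes]) (use b1 in auto)
  have inB: "?B permutes {1..a+b-1}" unfolding puzzle_beta_def
    by (rule permutes_subset[OF cycle_permutes]) (use a1 in auto)
  interpret G: group ?G by (rule sym_group_is_group)
  show "config_group a b \<subseteq> (if odd a \<and> odd b then carrier (alt_group (a+b-1)) else carrier (sym_group (a+b-1)))"
  proof (cases "odd a \<and> odd b")
    case True
    have ev_cyc: "distinct xs \<Longrightarrow> evenperm (cycle_of_list xs) = even (length xs - 1)" for xs :: "nat list"
    proof (induction xs rule: cycle_of_list.induct)
      case (1 i j cs)
      have e: "cycle_of_list (i # j # cs) = transpose i j \<circ> cycle_of_list (j # cs)"
        by (simp only: cycle_of_list.simps)
      have "evenperm (cycle_of_list (i # j # cs)) = (evenperm (transpose i j) = evenperm (cycle_of_list (j # cs)))"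
        unfolding e by (rule evenperm_comp[OF permutation_swap_id permutation_of_cycle])
      then have X: "evenperm (cycle_of_list (i # j # cs)) = (False = evenperm (cycle_of_list (j # cs)))"
        using 1 by (simp only: evenperm_swap distinct.simps set_simps) simp
      have IH: "evenperm (cycle_of_list (j # cs)) = even (length (j#cs) - 1)" using 1 by simp
      have l: "even (length (i#j#cs) - 1) = odd (length (j#cs) - 1)" by simp
      show ?case unfolding X l IH by simp
    qed auto
    have "evenperm ?A" "evenperm ?B" unfolding puzzle_alpha_def puzzle_beta_def
      using True ev_cyc[of "[1..<a+1]"] ev_cyc[of "[a..<a+b]"] by auto
    then have "{?A, ?B} \<subseteq> carrier (alt_group (a+b-1))" using inA inB by (auto simp: alt_group_carrier)
    then have "config_group a b \<subseteq> carrier (alt_group (a+b-1))"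
      unfolding config_group_def by (rule G.generate_subgroup_incl[OF _ alt_group_is_subgroup])
    then show ?thesis unfolding if_P[OF True] .
  next
    case False
    have "{?A, ?B} \<subseteq> carrier ?G" using inA inB by (auto simp: sym_group_carrier)
    then have "config_group a b \<subseteq> carrier ?G" unfolding config_group_def by (rule G.generate_incl)
    then show ?thesis unfolding if_not_P[OF False] .
  qed
  show "(if odd a \<and> odd b then carrier (alt_group (a+b-1)) else carrier (sym_group (a+b-1))) \<subseteq> config_group a b"
  proof
    fix p assume "p \<in> (if odd a \<and> odd b then carrier (alt_group (a+b-1)) else carrier (sym_group (a+b-1)))"
    then have "p permutes {1..a+b-1}" "evenperm p \<or> \<not> (odd a \<and> odd b)"
      by (auto simp: alt_group_carrier sym_group_carrier split: if_splits)
    then show "p \<in> config_group a b" using wl_bound wl_in_gen by blast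
  qed
qed

lemma word_bound: "p \<in> config_group a b \<Longrightarrow> wl a b p (17 * (a+b-1)^2)"
  unfolding group_eq
  by (rule wl_bound) (auto simp: alt_group_carrier sym_group_carrier split: if_splits)

end

theorem theorem1:
  shows "(\<forall>a b::nat. a > 1 \<longrightarrow> b > 1 \<longrightarrow>
            config_group a b =
              (if odd a \<and> odd b then carrier (alt_group (a+b-1)) else carrier (sym_group (a+b-1))))
       \<and> (\<exists>K::nat. \<forall>a b::nat. a > 1 \<longrightarrow> b > 1 \<longrightarrow>
            (\<forall>p \<in> config_group a b. \<exists>ws. set ws \<subseteq> puzzle_shifts a b
                 \<and> length ws \<le> K * (a+b-1)^2 \<and> p = foldr (\<circ>) ws id))"
proof (intro conjI allI impI)
  fix a b :: nat assume "1 < a" "1 < b"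
  then show "config_group a b =
              (if odd a \<and> odd b then carrier (alt_group (a+b-1)) else carrier (sym_group (a+b-1)))"
    by (rule group_eq)
next
  show "\<exists>K::nat. \<forall>a b::nat. a > 1 \<longrightarrow> b > 1 \<longrightarrow>
            (\<forall>p \<in> config_group a b. \<exists>ws. set ws \<subseteq> puzzle_shifts a b
                 \<and> length ws \<le> K * (a+b-1)^2 \<and> p = foldr (\<circ>) ws id)"
    by (rule exI[of _ 17]) (use word_bound in \<open>auto simp: wl_def\<close>)
qed

end
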